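(* Fix an instance of MCND and an arbitrary partial aggregation $\mathcal{B}^p$ (see context). (i) If $(\bar x,\bar y)$ is a feasible solution of the LP relaxation of the PA formulation built on $\mathcal{B}^p$, then $(x,y)$ defined by $x_{ij}^{\mathcal{K}_n}=\sum_{b\in\mathcal{B}^p:o_b=n}\sum_{D\in\mathcal{G}_b^{ij}}\bar x_{ij}^D$ for every arc $(i,j)\in\mathcal{A}$ and every node $n$ that is the origin of at least one commodity, and $y_{ij}=\bar y_{ij}$, is a feasible solution of the LP relaxation of the FA formulation, with the same objective value. (ii) There exist an instance and a partial aggregation $\mathcal{B}^p$ for which the LP relaxation of FA has a feasible solution that is not the image under this map of any feasible solution of the LP relaxation of PA built on $\mathcal{B}^p$. (That is, PA is stronger than FA.)
   Context: An instance of MCND consists of a directed graph $G=(\mathcal{N},\mathcal{A})$, a finite set $\mathcal{K}$ of commodities, each $k\in\mathcal{K}$ having an origin $o^k\in\mathcal{N}$, a destination $s^k\in\mathcal{N}$ and a demand $d^k\ge 0$, and for each arc $(i,j)\in\mathcal{A}$ a capacity $u_{ij}$, a per-unit flow cost $c_{ij}$ and a fixed cost $f_{ij}$, all nonnegative. Let $o_i^k=1$ if $i=o^k$ and $0$ otherwise, $s_i^k=1$ if $i=s^k$ and $0$ otherwise, $\mathcal{N}_i^+=\{j:(i,j)\in\mathcal{A}\}$, $\mathcal{N}_i^-=\{j:(j,i)\in\mathcal{A}\}$. Dispersion: a nonempty set $\mathcal{K}_b\subseteq\mathcal{K}$ of commodities sharing a common origin $o_b$, together with, for every arc $(i,j)\in\mathcal{A}$,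 a partition of $\mathcal{K}_b$ into $\mathcal{K}_b^{ij}$ (aggregated on $(i,j)$) and $\mathcal{D}_b^{ij}$ (disaggregated on $(i,j)$); either part may be empty. Let $\mathcal{G}_b^{ij}$ be the family consisting of the set $\mathcal{K}_b^{ij}$ (if nonempty) together with the singletons $\{k\}$, $k\in\mathcal{D}_b^{ij}$. A partial aggregation is a set $\mathcal{B}$ of dispersions such that every $k\in\mathcal{K}$ lies in $\mathcal{K}_b$ for exactly one $b\in\mathcal{B}$. LP relaxation of PA (for $\mathcal{B}$): variables $x_{ij}^D\ge0$ for $(i,j)\in\mathcal{A}$, $b\in\mathcal{B}$, $D\in\mathcal{G}_b^{ij}$ (since the $\mathcal{K}_b$ are disjoint, $D$ determines $b$), and $0\le y_{ij}\le1$; minimize $\sum_{(i,j)}c_{ij}\sum_{b}\sum_{D\in\mathcal{G}_b^{ij}}x_{ij}^D+\sum_{(i,j)}f_{ij}y_{ij}$ subject to: for all $b\in\mathcal{B}$, $i\in\mathcal{N}$: $\sum_{j\in\mathcal{N}_i^+}\sum_{D\in\mathcal{G}_b^{ij}}x_{ij}^D-\sum_{j\in\mathcal{N}_i^-}\sum_{D\in\mathcal{G}_b^{ji}}x_{ji}^D=\sum_{k\in\mathcal{K}_b}(o_i^k-s_i^k)d^k$; for all $(i,j)$: $\sum_b\sum_{D\in\mathcal{G}_b^{ij}}x_{ij}^D\le u_{ij}y_{ij}$; for all $(i,j),b,D\in\mathcal{G}_b^{ij}$: $x_{ij}^D\le(\sum_{k\in D}d^k)y_{ij}$. FA formulation: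 the full aggregation $\mathcal{B}^f$ has one dispersion for each node $n$ that is the origin of at least one commodity, with $\mathcal{K}_n=\{k\in\mathcal{K}:o^k=n\}$, $\mathcal{K}_n^{ij}=\mathcal{K}_n$ and $\mathcal{D}_n^{ij}=\emptyset$ for every arc; the LP relaxation of FA is the LP relaxation of PA for $\mathcal{B}^f$, with variables $x_{ij}^{\mathcal{K}_n}$ and $y_{ij}$. *)

theory Defs
  imports Complex_Main
begin

record ('n, 'k) mcnd =
  nodes :: "'n set"
  arcs  :: "('n \<times> 'n) set"
  comms :: "'k set"
  orig  :: "'k \<Rightarrow> 'n"
  dest  :: "'k \<Rightarrow> 'n"
  dem   :: "'k \<Rightarrow> real"
  cap   :: "'n \<times> 'n \<Rightarrow> real"
  ucost :: "'n \<times> 'n \<Rightarrow> real"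
  fcost :: "'n \<times> 'n \<Rightarrow> real"

definition mcnd_wf :: "('n, 'k) mcnd \<Rightarrow> bool" where
  "mcnd_wf I \<longleftrightarrow> finite (nodes I) \<and> arcs I \<subseteq> nodes I \<times> nodes I \<and> finite (comms I)
     \<and> (\<forall>k\<in>comms I. orig I k \<in> nodes I \<and> dest I k \<in> nodes I \<and> dem I k \<ge> 0)
     \<and> (\<forall>a\<in>arcs I. cap I a \<ge> 0 \<and> ucost I a \<ge> 0 \<and> fcost I a \<ge> 0)"

text \<open>A dispersion: the commodity set K_b together with, for each arc, the aggregated
  part K_b^{ij}; the disaggregated part is D_b^{ij} = K_b - K_b^{ij}.\<close>
type_synonym ('n, 'k) dispersion = "'k set \<times> ('n \<times> 'n \<Rightarrow> 'k set)"

definition dispK :: "('n, 'k) dispersion \<Rightarrow> 'k set" where "dispK b = fst b"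
definition dispAgg :: "('n, 'k) dispersion \<Rightarrow> 'n \<times> 'n \<Rightarrow> 'k set" where "dispAgg b = snd b"

definition is_dispersion :: "('n, 'k) mcnd \<Rightarrow> ('n, 'k) dispersion \<Rightarrow> bool" where
  "is_dispersion I b \<longleftrightarrow> dispK b \<noteq> {} \<and> dispK b \<subseteq> comms I
     \<and> (\<exists>n. \<forall>k\<in>dispK b. orig I k = n)
     \<and> (\<forall>a\<in>arcs I. dispAgg b a \<subseteq> dispK b)"

definition disp_origin :: "('n, 'k) mcnd \<Rightarrow> ('n, 'k) dispersion \<Rightarrow> 'n" where
  "disp_origin I b = orig I (SOME k. k \<in> dispK b)"

definition Gfam :: "('n, 'k) dispersion \<Rightarrow> 'n \<times> 'n \<Rightarrow> 'k set set" where
  "Gfam b a = {D. D = dispAgg b a \<and> D \<noteq> {}} \<union> {{k} | k. k \<in> dispK b - dispAgg b a}"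

definition partial_agg :: "('n, 'k) mcnd \<Rightarrow> ('n, 'k) dispersion set \<Rightarrow> bool" where
  "partial_agg I B \<longleftrightarrow> (\<forall>b\<in>B. is_dispersion I b) \<and> (\<forall>k\<in>comms I. \<exists>!b. b \<in> B \<and> k \<in> dispK b)"

definition bflow :: "('n, 'k) dispersion \<Rightarrow> ('n \<times> 'n \<Rightarrow> 'k set \<Rightarrow> real) \<Rightarrow> 'n \<times> 'n \<Rightarrow> real" where
  "bflow b x a = (\<Sum>D\<in>Gfam b a. x a D)"

definition ind :: "bool \<Rightarrow> real" where "ind P = (if P then 1 else 0)"

definition pa_lp_feasible ::
  "('n, 'k) mcnd \<Rightarrow> ('n, 'k) dispersion set \<Rightarrow> ('n \<times> 'n \<Rightarrow> 'k set \<Rightarrow> real) \<Rightarrow> ('n \<times> 'n \<Rightarrow> real) \<Rightarrow> bool" where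
  "pa_lp_feasible I B x y \<longleftrightarrow>
     (\<forall>a\<in>arcs I. \<forall>b\<in>B. \<forall>D\<in>Gfam b a. x a D \<ge> 0)
   \<and> (\<forall>a\<in>arcs I. 0 \<le> y a \<and> y a \<le> 1)
   \<and> (\<forall>b\<in>B. \<forall>i\<in>nodes I.
        (\<Sum>a\<in>{a\<in>arcs I. fst a = i}. bflow b x a) - (\<Sum>a\<in>{a\<in>arcs I. snd a = i}. bflow b x a)
        = (\<Sum>k\<in>dispK b. (ind (i = orig I k) - ind (i = dest I k)) * dem I k))
   \<and> (\<forall>a\<in>arcs I. (\<Sum>b\<in>B. bflow b x a) \<le> cap I a * y a)
   \<and> (\<forall>a\<in>arcs I. \<forall>b\<in>B. \<forall>D\<in>Gfam b a. x a D \<le> (\<Sum>k\<in>D. dem I k) * y a)"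

definition pa_lp_obj ::
  "('n, 'k) mcnd \<Rightarrow> ('n, 'k) dispersion set \<Rightarrow> ('n \<times> 'n \<Rightarrow> 'k set \<Rightarrow> real) \<Rightarrow> ('n \<times> 'n \<Rightarrow> real) \<Rightarrow> real" where
  "pa_lp_obj I B x y = (\<Sum>a\<in>arcs I. ucost I a * (\<Sum>b\<in>B. bflow b x a)) + (\<Sum>a\<in>arcs I. fcost I a * y a)"

definition origins :: "('n, 'k) mcnd \<Rightarrow> 'n set" where "origins I = orig I ` comms I"

definition Kn :: "('n, 'k) mcnd \<Rightarrow> 'n \<Rightarrow> 'k set" where "Kn I n = {k\<in>comms I. orig I k = n}"

definition full_agg :: "('n, 'k) mcnd \<Rightarrow> ('n, 'k) dispersion set" where
  "full_agg I = {(Kn I n, \<lambda>a. Kn I n) | n. n \<in> origins I}"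

definition pa_to_fa ::
  "('n, 'k) mcnd \<Rightarrow> ('n, 'k) dispersion set \<Rightarrow> ('n \<times> 'n \<Rightarrow> 'k set \<Rightarrow> real) \<Rightarrow> 'n \<times> 'n \<Rightarrow> 'n \<Rightarrow> real" where
  "pa_to_fa I B x a n = (\<Sum>b\<in>{b\<in>B. disp_origin I b = n}. \<Sum>D\<in>Gfam b a. x a D)"

end

theory Submission
  imports Defs
begin

lemma Gfam_props:
  assumes "dispAgg b a \<subseteq> dispK b" "finite (dispK b)"
  shows "finite (Gfam b a)" "\<Union>(Gfam b a) = dispK b"
        "\<forall>A\<in>Gfam b a. \<forall>C\<in>Gfam b a. A \<noteq> C \<longrightarrow> A \<inter> C = {}"
        "\<forall>A\<in>Gfam b a. finite A" "\<forall>A\<in>Gfam b a. A \<subseteq> dispK b \<and> A \<noteq> {}"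
proof -
  have eq: "Gfam b a = {D. D = dispAgg b a \<and> D \<noteq> {}} \<union> (\<lambda>k. {k}) ` (dispK b - dispAgg b a)"
    unfolding Gfam_def by auto
  show "finite (Gfam b a)" unfolding eq using assms by auto
  show "\<Union>(Gfam b a) = dispK b" unfolding eq using assms by auto
  show "\<forall>A\<in>Gfam b a. \<forall>C\<in>Gfam b a. A \<noteq> C \<longrightarrow> A \<inter> C = {}" unfolding eq by auto
  show "\<forall>A\<in>Gfam b a. finite A" unfolding eq using assms by (auto intro: finite_subset)
  show "\<forall>A\<in>Gfam b a. A \<subseteq> dispK b \<and> A \<noteq> {}" unfolding eq using assms by auto
qed

lemma Gfam_sum:
  assumes "dispAgg b a \<subseteq> dispK b" "finite (dispK b)"
  shows "(\<Sum>D\<in>Gfam b a. \<Sum>k\<in>D. f k) = (\<Sum>k\<in>dispK b. f k)"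
  using sum.Union_disjoint[OF Gfam_props(4,3)[OF assms], of f] Gfam_props(2)[OF assms] by simp

lemma G_full: "Gfam (K, \<lambda>a. K) a = (if K = {} then {} else {K})"
  by (auto simp: Gfam_def dispK_def dispAgg_def)

lemma part1:
  assumes wf: "mcnd_wf I" and pa: "partial_agg I B" and fe: "pa_lp_feasible I B x y"
  shows "\<exists>xf. (\<forall>a\<in>arcs I. \<forall>n\<in>origins I. xf a (Kn I n) = pa_to_fa I B x a n)
                 \<and> pa_lp_feasible I (full_agg I) xf y
                 \<and> pa_lp_obj I (full_agg I) xf y = pa_lp_obj I B x y"
proof -
  have fin_comms: "finite (comms I)" and fin_nodes: "finite (nodes I)" and arcs_sub: "arcs I \<subseteq> nodes I \<times> nodes I"
    using wf by (auto simp: mcnd_wf_def)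
  have fin_arcs: "finite (arcs I)" using arcs_sub fin_nodes by (meson finite_SigmaI finite_subset)
  have disp: "\<And>b. b \<in> B \<Longrightarrow> is_dispersion I b" using pa by (auto simp: partial_agg_def)
  have uniq: "\<And>k b1 b2. k \<in> comms I \<Longrightarrow> b1 \<in> B \<Longrightarrow> b2 \<in> B \<Longrightarrow> k \<in> dispK b1 \<Longrightarrow> k \<in> dispK b2 \<Longrightarrow> b1 = b2"
    using pa unfolding partial_agg_def by metis
  have cover: "\<And>k. k \<in> comms I \<Longrightarrow> \<exists>b\<in>B. k \<in> dispK b"
    using pa unfolding partial_agg_def by metis
  have Ksub: "\<And>b. b \<in> B \<Longrightarrow> dispK b \<subseteq> comms I" using disp by (auto simp: is_dispersion_def)
  have Kne: "\<And>b. b \<in> B \<Longrightarrow> dispK b \<noteq> {}" using disp by (auto simp: is_dispersion_def)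
  have Kfin: "\<And>b. b \<in> B \<Longrightarrow> finite (dispK b)" using Ksub fin_comms finite_subset by blast
  have Aggsub: "\<And>b a. b \<in> B \<Longrightarrow> a \<in> arcs I \<Longrightarrow> dispAgg b a \<subseteq> dispK b"
    using disp by (auto simp: is_dispersion_def)
  have dorig: "\<And>b k. b \<in> B \<Longrightarrow> k \<in> dispK b \<Longrightarrow> disp_origin I b = orig I k"
  proof -
    fix b k assume b: "b \<in> B" and k: "k \<in> dispK b"
    obtain n where n: "\<forall>k\<in>dispK b. orig I k = n" using disp[OF b] by (auto simp: is_dispersion_def)
    have "(SOME k. k \<in> dispK b) \<in> dispK b" using k by (rule someI)
    thus "disp_origin I b = orig I k" using n k by (simp add: disp_origin_def)
  qed
  have disj: "\<And>b1 b2. b1 \<in> B \<Longrightarrow> b2 \<in> B \<Longrightarrow> b1 \<noteq> b2 \<Longrightarrow> dispK b1 \<inter> dispK b2 = {}"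
    using uniq Ksub by blast
  have finB: "finite B"
  proof -
    let ?f = "\<lambda>b. SOME k. k \<in> dispK b"
    have mem: "\<And>b. b \<in> B \<Longrightarrow> ?f b \<in> dispK b" using Kne by (simp add: some_in_eq)
    have "inj_on ?f B" using mem uniq Ksub by (smt (verit) inj_onI subsetD)
    moreover have "?f ` B \<subseteq> comms I" using mem Ksub by blast
    ultimately show ?thesis using fin_comms by (meson finite_imageD finite_subset)
  qed
  have orig_B: "\<And>b. b \<in> B \<Longrightarrow> disp_origin I b \<in> origins I"
  proof -
    fix b assume b: "b \<in> B"
    then obtain k where "k \<in> dispK b" using Kne by blast
    thus "disp_origin I b \<in> origins I" using dorig[OF b] Ksub[OF b] by (auto simp: origins_def)
  qed
  define Bn where "Bn n = {b\<in>B. disp_origin I b = n}" for n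
  have Kn_union: "\<And>n. Kn I n = (\<Union>b\<in>Bn n. dispK b)"
  proof -
    fix n show "Kn I n = (\<Union>b\<in>Bn n. dispK b)"
    proof
      show "Kn I n \<subseteq> (\<Union>b\<in>Bn n. dispK b)"
      proof
        fix k assume "k \<in> Kn I n"
        hence k: "k \<in> comms I" "orig I k = n" by (auto simp: Kn_def)
        then obtain b where b: "b \<in> B" "k \<in> dispK b" using cover by blast
        hence "b \<in> Bn n" using dorig k by (simp add: Bn_def)
        thus "k \<in> (\<Union>b\<in>Bn n. dispK b)" using b by blast
      qed
      show "(\<Union>b\<in>Bn n. dispK b) \<subseteq> Kn I n"
      proof
        fix k assume "k \<in> (\<Union>b\<in>Bn n. dispK b)"
        then obtain b where b: "b \<in> B" "disp_origin I b = n" "k \<in> dispK b" by (auto simp: Bn_def)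
        thus "k \<in> Kn I n" using dorig[OF b(1,3)] Ksub[OF b(1)] by (auto simp: Kn_def)
      qed
    qed
  qed
  have finBn: "\<And>n. finite (Bn n)" using finB by (simp add: Bn_def)
  have sumKn: "\<And>n g. (\<Sum>k\<in>Kn I n. g k) = (\<Sum>b\<in>Bn n. \<Sum>k\<in>dispK b. g k)"
    unfolding Kn_union by (rule sum.UNION_disjoint[OF finBn]) (use Kfin disj in \<open>auto simp: Bn_def\<close>)
  have Kn_ne: "\<And>n. n \<in> origins I \<Longrightarrow> Kn I n \<noteq> {}" by (auto simp: origins_def Kn_def)
  have Kn_orig: "\<And>n. n \<in> origins I \<Longrightarrow> orig I (SOME k. k \<in> Kn I n) = n"
  proof -
    fix n assume "n \<in> origins I"
    hence "(SOME k. k \<in> Kn I n) \<in> Kn I n" using Kn_ne by (simp add: some_in_eq)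
    thus "orig I (SOME k. k \<in> Kn I n) = n" by (simp add: Kn_def)
  qed
  define F where "F n = (Kn I n, \<lambda>a::'a \<times> 'a. Kn I n)" for n
  have FA: "full_agg I = F ` origins I" by (auto simp: full_agg_def F_def)
  have injF: "inj_on F (origins I)"
    by (rule inj_onI) (metis F_def Kn_orig fst_conv)
  have fin_orig: "finite (origins I)" using fin_comms by (simp add: origins_def)
  define xf where "xf a D = pa_to_fa I B x a (orig I (SOME k. k \<in> D))" for a D
  have xfK: "\<And>a n. n \<in> origins I \<Longrightarrow> xf a (Kn I n) = pa_to_fa I B x a n"
    by (simp add: xf_def Kn_orig)
  have bfF: "\<And>a n. n \<in> origins I \<Longrightarrow> bflow (F n) xf a = (\<Sum>b\<in>Bn n. bflow b x a)"
    using Kn_ne by (simp add: bflow_def F_def G_full xfK pa_to_fa_def Bn_def)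
  have sumFA: "\<And>g. (\<Sum>c\<in>full_agg I. g c) = (\<Sum>n\<in>origins I. g (F n))"
    unfolding FA by (simp add: sum.reindex[OF injF])
  have group: "\<And>h. (\<Sum>n\<in>origins I. \<Sum>b\<in>Bn n. h b) = (\<Sum>b\<in>B. h b)"
    unfolding Bn_def by (rule sum.group[OF finB fin_orig]) (use orig_B in blast)
  have capeq: "\<And>a. (\<Sum>c\<in>full_agg I. bflow c xf a) = (\<Sum>b\<in>B. bflow b x a)"
    by (simp add: sumFA bfF group)
  from fe have
    f1: "\<forall>a\<in>arcs I. \<forall>b\<in>B. \<forall>D\<in>Gfam b a. x a D \<ge> 0" and
    f2: "\<forall>a\<in>arcs I. 0 \<le> y a \<and> y a \<le> 1" and
    f3: "\<forall>b\<in>B. \<forall>i\<in>nodes I.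
        (\<Sum>a\<in>{a\<in>arcs I. fst a = i}. bflow b x a) - (\<Sum>a\<in>{a\<in>arcs I. snd a = i}. bflow b x a)
        = (\<Sum>k\<in>dispK b. (ind (i = orig I k) - ind (i = dest I k)) * dem I k)" and
    f4: "\<forall>a\<in>arcs I. (\<Sum>b\<in>B. bflow b x a) \<le> cap I a * y a" and
    f5: "\<forall>a\<in>arcs I. \<forall>b\<in>B. \<forall>D\<in>Gfam b a. x a D \<le> (\<Sum>k\<in>D. dem I k) * y a"
    unfolding pa_lp_feasible_def by blast+
  have "pa_lp_feasible I (full_agg I) xf y"
    unfolding pa_lp_feasible_def
  proof (intro conjI)
    show "\<forall>a\<in>arcs I. \<forall>c\<in>full_agg I. \<forall>D\<in>Gfam c a. 0 \<le> xf a D"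
    proof (intro ballI)
      fix a c D assume a: "a \<in> arcs I" and c: "c \<in> full_agg I" and D: "D \<in> Gfam c a"
      from c obtain n where n: "n \<in> origins I" "c = F n" using FA by blast
      hence "D = Kn I n" using D by (simp add: F_def G_full split: if_splits)
      hence "xf a D = (\<Sum>b\<in>Bn n. bflow b x a)" using xfK n by (simp add: pa_to_fa_def Bn_def bflow_def)
      also have "\<dots> \<ge> 0" using f1 a by (auto simp: Bn_def bflow_def intro!: sum_nonneg)
      finally show "0 \<le> xf a D" .
    qed
    show "\<forall>a\<in>arcs I. 0 \<le> y a \<and> y a \<le> 1" by (rule f2)
    show "\<forall>c\<in>full_agg I. \<forall>i\<in>nodes I.
        (\<Sum>a\<in>{a\<in>arcs I. fst a = i}. bflow c xf a) - (\<Sum>a\<in>{a\<in>arcs I. snd a = i}. bflow c xf a)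
        = (\<Sum>k\<in>dispK c. (ind (i = orig I k) - ind (i = dest I k)) * dem I k)"
    proof (intro ballI)
      fix c i assume c: "c \<in> full_agg I" and i: "i \<in> nodes I"
      from c obtain n where n: "n \<in> origins I" "c = F n" using FA by blast
      have "(\<Sum>a\<in>{a\<in>arcs I. fst a = i}. bflow c xf a) - (\<Sum>a\<in>{a\<in>arcs I. snd a = i}. bflow c xf a)
         = (\<Sum>a\<in>{a\<in>arcs I. fst a = i}. \<Sum>b\<in>Bn n. bflow b x a) - (\<Sum>a\<in>{a\<in>arcs I. snd a = i}. \<Sum>b\<in>Bn n. bflow b x a)"
        using n bfF by simp
      also have "\<dots> = (\<Sum>b\<in>Bn n. (\<Sum>a\<in>{a\<in>arcs I. fst a = i}. bflow b x a) - (\<Sum>a\<in>{a\<in>arcs I. snd a = i}. bflow b x a))"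
        by (simp add: sum_subtractf sum.swap[of _ "Bn n"])
      also have "\<dots> = (\<Sum>b\<in>Bn n. \<Sum>k\<in>dispK b. (ind (i = orig I k) - ind (i = dest I k)) * dem I k)"
        using f3 i by (intro sum.cong) (auto simp: Bn_def)
      also have "\<dots> = (\<Sum>k\<in>dispK c. (ind (i = orig I k) - ind (i = dest I k)) * dem I k)"
        using n by (simp add: sumKn F_def dispK_def)
      finally show "(\<Sum>a\<in>{a\<in>arcs I. fst a = i}. bflow c xf a) - (\<Sum>a\<in>{a\<in>arcs I. snd a = i}. bflow c xf a)
        = (\<Sum>k\<in>dispK c. (ind (i = orig I k) - ind (i = dest I k)) * dem I k)" .
    qed
    show "\<forall>a\<in>arcs I. (\<Sum>c\<in>full_agg I. bflow c xf a) \<le> cap I a * y a"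
      using f4 capeq by simp
    show "\<forall>a\<in>arcs I. \<forall>c\<in>full_agg I. \<forall>D\<in>Gfam c a. xf a D \<le> (\<Sum>k\<in>D. dem I k) * y a"
    proof (intro ballI)
      fix a c D assume a: "a \<in> arcs I" and c: "c \<in> full_agg I" and D: "D \<in> Gfam c a"
      from c obtain n where n: "n \<in> origins I" "c = F n" using FA by blast
      hence DK: "D = Kn I n" using D by (simp add: F_def G_full split: if_splits)
      hence "xf a D = (\<Sum>b\<in>Bn n. \<Sum>D\<in>Gfam b a. x a D)" using xfK n by (simp add: pa_to_fa_def Bn_def)
      also have "\<dots> \<le> (\<Sum>b\<in>Bn n. \<Sum>D\<in>Gfam b a. (\<Sum>k\<in>D. dem I k) * y a)"
        using f5 a by (intro sum_mono) (auto simp: Bn_def)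
      also have "\<dots> = (\<Sum>b\<in>Bn n. (\<Sum>D\<in>Gfam b a. \<Sum>k\<in>D. dem I k) * y a)"
        by (simp add: sum_distrib_right)
      also have "\<dots> = (\<Sum>b\<in>Bn n. (\<Sum>k\<in>dispK b. dem I k) * y a)"
      proof (intro sum.cong refl)
        fix b assume "b \<in> Bn n"
        hence b: "b \<in> B" by (simp add: Bn_def)
        show "(\<Sum>D\<in>Gfam b a. \<Sum>k\<in>D. dem I k) * y a = (\<Sum>k\<in>dispK b. dem I k) * y a"
          using Gfam_sum[OF Aggsub[OF b a] Kfin[OF b], of "dem I"] by simp
      qed
      also have "\<dots> = (\<Sum>k\<in>D. dem I k) * y a"
        by (simp add: DK sumKn sum_distrib_right)
      finally show "xf a D \<le> (\<Sum>k\<in>D. dem I k) * y a" .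
    qed
  qed
  moreover have "pa_lp_obj I (full_agg I) xf y = pa_lp_obj I B x y"
    by (simp add: pa_lp_obj_def capeq)
  ultimately show ?thesis using xfK by blast
qed

definition I0 :: "(nat, nat) mcnd" where
 "I0 = \<lparr>nodes = {0,1,2}, arcs = {(0,1),(0,2)}, comms = {0,1}, orig = (\<lambda>_. 0),
        dest = (\<lambda>k. k+1), dem = (\<lambda>_. 1), cap = (\<lambda>_. 2), ucost = (\<lambda>_. 0), fcost = (\<lambda>_. 0)\<rparr>"

definition B0 :: "(nat, nat) dispersion set" where
 "B0 = {({0}, \<lambda>a. {0}), ({1}, \<lambda>a. {1})}"

lemma wf0: "mcnd_wf I0" by (simp add: mcnd_wf_def I0_def)

lemma pa0: "partial_agg I0 B0"
  by (auto simp: partial_agg_def is_dispersion_def I0_def B0_def dispK_def dispAgg_def)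

lemma orig0: "origins I0 = {0}" by (auto simp: origins_def I0_def)
lemma Kn0: "Kn I0 0 = {0,1}" by (auto simp: Kn_def I0_def)
lemma fa0: "full_agg I0 = {({0,1}, \<lambda>a. {0,1})}"
  by (auto simp: full_agg_def orig0 Kn0)
lemma G0: "Gfam (K, \<lambda>a. K) a = (if K = {} then {} else {K})"
  by (auto simp: Gfam_def dispK_def dispAgg_def)

lemma arcs_out: "{a \<in> arcs I0. fst a = i} = (if i = 0 then {(0,1),(0,2)} else {})"
  by (auto simp: I0_def)
lemma arcs_in: "{a \<in> arcs I0. snd a = i} = (if i = 1 then {(0,1)} else if i = 2 then {(0,2)} else {})"
  by (auto simp: I0_def)

lemma fafeas: "pa_lp_feasible I0 (full_agg I0) (\<lambda>a D. 1) (\<lambda>a. 1/2)"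
  apply (simp add: pa_lp_feasible_def fa0 bflow_def G0 arcs_out arcs_in dispK_def)
  apply (simp add: I0_def ind_def)
  done

lemma notimg: "\<not> (\<exists>x y. pa_lp_feasible I0 B0 x y \<and> (\<forall>a\<in>arcs I0. (1/2::real) = y a))"
proof
  assume "\<exists>x y. pa_lp_feasible I0 B0 x y \<and> (\<forall>a\<in>arcs I0. (1/2::real) = y a)"
  then obtain x y where f: "pa_lp_feasible I0 B0 x y" and yy: "\<forall>a\<in>arcs I0. (1/2::real) = y a" by blast
  have G1: "Gfam ({0}, \<lambda>a. {0}) a = {{0::nat}}" for a :: "nat \<times> nat"
    by (auto simp: Gfam_def dispK_def dispAgg_def)
  have b: "({0}, \<lambda>a. {0}) \<in> B0" by (simp add: B0_def)
  have n1: "(1::nat) \<in> nodes I0" by (simp add: I0_def)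
  from f have c: "\<forall>b\<in>B0. \<forall>i\<in>nodes I0. (\<Sum>a\<in>{a\<in>arcs I0. fst a = i}. bflow b x a) - (\<Sum>a\<in>{a\<in>arcs I0. snd a = i}. bflow b x a)
        = (\<Sum>k\<in>dispK b. (ind (i = orig I0 k) - ind (i = dest I0 k)) * dem I0 k)"
    unfolding pa_lp_feasible_def by blast
  have e: "x (0,1) {0} = 1" using c[rule_format, OF b n1] unfolding arcs_out arcs_in bflow_def G1 by (simp add: dispK_def I0_def ind_def)
  have a: "(0,1) \<in> arcs I0" by (simp add: I0_def)
  from f have u: "\<forall>a\<in>arcs I0. \<forall>b\<in>B0. \<forall>D\<in>Gfam b a. x a D \<le> (\<Sum>k\<in>D. dem I0 k) * y a"
    unfolding pa_lp_feasible_def by blast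
  have "x (0,1) {0} \<le> (\<Sum>k\<in>{0}. dem I0 k) * y (0,1)"
    using u[rule_format, OF a b] by (simp add: G1)
  with e yy a show False by (simp add: I0_def)
qed

lemma part2: "\<exists>(I :: (nat, nat) mcnd) B xf yf.
            mcnd_wf I \<and> partial_agg I B \<and> pa_lp_feasible I (full_agg I) xf yf
          \<and> \<not> (\<exists>x y. pa_lp_feasible I B x y
                  \<and> (\<forall>a\<in>arcs I. \<forall>n\<in>origins I. xf a (Kn I n) = pa_to_fa I B x a n)
                  \<and> (\<forall>a\<in>arcs I. yf a = y a))"
  apply (rule exI[of _ I0], rule exI[of _ B0], rule exI[of _ "\<lambda>a D. 1"], rule exI[of _ "\<lambda>a. 1/2"])
  using wf0 pa0 fafeas notimg by blast
theorem theorem4: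
  shows "(\<forall>(I :: ('n, 'k) mcnd) B x y.
            mcnd_wf I \<and> partial_agg I B \<and> pa_lp_feasible I B x y \<longrightarrow>
            (\<exists>xf. (\<forall>a\<in>arcs I. \<forall>n\<in>origins I. xf a (Kn I n) = pa_to_fa I B x a n)
                 \<and> pa_lp_feasible I (full_agg I) xf y
                 \<and> pa_lp_obj I (full_agg I) xf y = pa_lp_obj I B x y))
       \<and> (\<exists>(I :: (nat, nat) mcnd) B xf yf.
            mcnd_wf I \<and> partial_agg I B \<and> pa_lp_feasible I (full_agg I) xf yf
          \<and> \<not> (\<exists>x y. pa_lp_feasible I B x y
                  \<and> (\<forall>a\<in>arcs I. \<forall>n\<in>origins I. xf a (Kn I n) = pa_to_fa I B x a n)
                  \<and> (\<forall>a\<in>arcs I. yf a = y a)))"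
  using part1 part2 by blast

end
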